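(* Let $n\ge1$, $0\le t_0<t$, and let $g:\mathbb{R}^{2n}\to\mathbb{R}$ be locally integrable. Then $$\sum_{\underline{\pi}}\ \int_{t_0\le t_1\le\cdots\le t_{2n}\le t}dt_1\cdots dt_{2n}\ g(t_{\iota_1},t_{\sigma_1};\dots;t_{\iota_n},t_{\sigma_n})=\int_{t_0\le u_1\le\cdots\le u_n\le t}du_1\cdots du_n\int_{u_m\le u'_m\le t,\ m=1,\dots,n}du'_1\cdots du'_n\ g(u_1,u'_1;\dots;u_n,u'_n),$$ where the sum runs over all pairings $\underline{\pi}=\{(\iota_1,\sigma_1),\dots,(\iota_n,\sigma_n)\}$ of $(1,\dots,2n)$.
   Context: A pairing of $(1,\dots,2n)$ is a set $\{(\iota_1,\sigma_1),\dots,(\iota_n,\sigma_n)\}$ of $n$ pairs of indices such that $1=\iota_1<\iota_2<\cdots<\iota_n$, $\iota_m<\sigma_m$ for each $m$, and $\{\iota_1,\dots,\iota_n\}\cup\{\sigma_1,\dots,\sigma_n\}=\{1,\dots,2n\}$. *)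

theory Defs
  imports "HOL-Analysis.Analysis" "HOL-Probability.Probability"
begin

definition pairing :: "nat \<Rightarrow> (nat \<times> nat) set \<Rightarrow> bool" where
  "pairing n P \<longleftrightarrow> P \<subseteq> {1..2*n} \<times> {1..2*n} \<and> card P = n \<and>
     (\<forall>(i, s) \<in> P. i < s) \<and> fst ` P \<union> snd ` P = {1..2*n}"

definition pairing_iota :: "(nat \<times> nat) set \<Rightarrow> nat \<Rightarrow> nat" where
  "pairing_iota P m = sorted_list_of_set (fst ` P) ! (m - 1)"

definition pairing_sigma :: "(nat \<times> nat) set \<Rightarrow> nat \<Rightarrow> nat" where
  "pairing_sigma P m = (THE s. (pairing_iota P m, s) \<in> P)"

text \<open>Argument of g: coordinates 0..2n-1 of a point of R^{2n} hold
  (t_iota_1, t_sigma_1, ..., t_iota_n, t_sigma_n).\<close>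
definition pairing_arg :: "nat \<Rightarrow> (nat \<times> nat) set \<Rightarrow> (nat \<Rightarrow> real) \<Rightarrow> (nat \<Rightarrow> real)" where
  "pairing_arg n P tt = (\<lambda>k. if k < 2*n then
      (if even k then tt (pairing_iota P (k div 2 + 1)) else tt (pairing_sigma P (k div 2 + 1)))
      else undefined)"

definition interleave_arg :: "nat \<Rightarrow> (nat \<Rightarrow> real) \<Rightarrow> (nat \<Rightarrow> real) \<Rightarrow> (nat \<Rightarrow> real)" where
  "interleave_arg n u u' = (\<lambda>k. if k < 2*n then
      (if even k then u (k div 2 + 1) else u' (k div 2 + 1)) else undefined)"

abbreviation lebR :: "nat set \<Rightarrow> (nat \<Rightarrow> real) measure" where
  "lebR I \<equiv> PiM I (\<lambda>_. lborel)"

definition locally_integrable_2n :: "nat \<Rightarrow> ((nat \<Rightarrow> real) \<Rightarrow> real) \<Rightarrow> bool" where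
  "locally_integrable_2n n g \<longleftrightarrow>
     (\<forall>R::real. set_integrable (lebR {..<2*n}) {x. \<forall>i<2*n. \<bar>x i\<bar> \<le> R} g)"

end

theory Submission
  imports Defs
begin

lemma even_idx: "(k::nat) < 2*n \<Longrightarrow> even k \<Longrightarrow> k div 2 + 1 \<in> {1..n} \<and> k = 2*(k div 2 + 1) - 2" by (elim evenE) auto
lemma odd_idx: "(k::nat) < 2*n \<Longrightarrow> odd k \<Longrightarrow> k div 2 + 1 \<in> {1..n} \<and> k = 2*(k div 2 + 1) - 1" by (elim oddE) auto
lemma idx_even: "(m::nat) \<in> {1..n} \<Longrightarrow> 2*m-2 < 2*n \<and> even (2*m-2) \<and> (2*m-2) div 2 + 1 = m" by (cases m) auto
lemma idx_odd: "(m::nat) \<in> {1..n} \<Longrightarrow> 2*m-1 < 2*n \<and> odd (2*m-1) \<and> (2*m-1) div 2 + 1 = m"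
  by (cases m) auto

lemma pairing_basic:
  assumes "pairing n P"
  shows "finite P" "inj_on fst P" "inj_on snd P" "card (fst ` P) = n" "card (snd ` P) = n"
    "fst ` P \<inter> snd ` P = {}"
proof -
  have sub: "P \<subseteq> {1..2*n} \<times> {1..2*n}" and cP: "card P = n" and U: "fst ` P \<union> snd ` P = {1..2*n}"
    using assms by (auto simp: pairing_def)
  show fP: "finite P" using sub finite_subset by blast
  have c1: "card (fst ` P) \<le> n" using cP card_image_le[OF fP] by metis
  have c2: "card (snd ` P) \<le> n" using cP card_image_le[OF fP] by metis
  have "2*n = card (fst ` P \<union> snd ` P)" using U by simp
  also have "\<dots> \<le> card (fst ` P) + card (snd ` P)" by (rule card_Un_le)
  finally have e1: "card (fst ` P) = n" and e2: "card (snd ` P) = n" using c1 c2 by auto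
  show "card (fst ` P) = n" "card (snd ` P) = n" by fact+
  show "inj_on fst P" using e1 cP fP by (simp add: inj_on_iff_eq_card)
  show "inj_on snd P" using e2 cP fP by (simp add: inj_on_iff_eq_card)
  have "card (fst ` P) + card (snd ` P) = card (fst ` P \<union> snd ` P) + card (fst ` P \<inter> snd ` P)"
    using fP by (intro card_Un_Int) auto
  then have "card (fst ` P \<inter> snd ` P) = 0" using e1 e2 U by simp
  then show "fst ` P \<inter> snd ` P = {}" using fP by simp
qed

lemma iota_props:
  assumes "pairing n P"
  shows "\<And>m. m \<in> {1..n} \<Longrightarrow> pairing_iota P m \<in> fst ` P"
    "\<And>m m'. m \<in> {1..n} \<Longrightarrow> m' \<in> {1..n} \<Longrightarrow> m < m' \<Longrightarrow> pairing_iota P m < pairing_iota P m'"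
    "fst ` P = pairing_iota P ` {1..n}"
proof -
  have fP: "finite (fst ` P)" using pairing_basic(1)[OF assms] by simp
  define sl where "sl = sorted_list_of_set (fst ` P)"
  have len: "length sl = n" using pairing_basic(4)[OF assms] unfolding sl_def by simp
  have st: "sorted_wrt (<) sl" unfolding sl_def by (rule strict_sorted_list_of_set)
  have set: "set sl = fst ` P" unfolding sl_def using fP by simp
  have io: "pairing_iota P m = sl ! (m - 1)" for m unfolding pairing_iota_def sl_def by simp
  show "pairing_iota P m \<in> fst ` P" if "m \<in> {1..n}" for m
  proof -
    have "m - 1 < length sl" using that len by auto
    then show ?thesis using nth_mem[of "m-1" sl] set io by simp
  qed
  show "pairing_iota P m < pairing_iota P m'" if "m \<in> {1..n}" "m' \<in> {1..n}" "m < m'" for m m'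
    using that len st io sorted_wrt_nth_less[OF st, of "m-1" "m'-1"] by auto
  show "fst ` P = pairing_iota P ` {1..n}"
  proof
    show "pairing_iota P ` {1..n} \<subseteq> fst ` P"
    proof
      fix x assume "x \<in> pairing_iota P ` {1..n}"
      then obtain m where m: "m \<in> {1..n}" "x = pairing_iota P m" by auto
      have "m - 1 < length sl" using m len by auto
      then show "x \<in> fst ` P" using nth_mem[of "m-1" sl] set io m by simp
    qed
    show "fst ` P \<subseteq> pairing_iota P ` {1..n}"
    proof
      fix a assume "a \<in> fst ` P"
      then obtain i where i: "i < n" "a = sl ! i" using set len by (metis in_set_conv_nth)
      then have "a = pairing_iota P (i+1)" using io by simp
      moreover have "i + 1 \<in> {1..n}" using i by auto
      ultimately show "a \<in> pairing_iota P ` {1..n}" by blast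
    qed
  qed
qed

lemma sigma_props:
  assumes "pairing n P" and m: "m \<in> {1..n}"
  shows "(pairing_iota P m, pairing_sigma P m) \<in> P" "pairing_iota P m < pairing_sigma P m"
proof -
  have "pairing_iota P m \<in> fst ` P" by (rule iota_props(1)[OF assms])
  then obtain p where p: "p \<in> P" "pairing_iota P m = fst p" by blast
  define b where "b = snd p"
  have b: "(pairing_iota P m, b) \<in> P" using p unfolding b_def by simp
  have u: "b' = b" if "(pairing_iota P m, b') \<in> P" for b'
    using inj_onD[OF pairing_basic(2)[OF assms(1)], of "(pairing_iota P m, b')" "(pairing_iota P m, b)"] b that by simp
  have "pairing_sigma P m = b" unfolding pairing_sigma_def using b u by (rule the_equality)
  then show i: "(pairing_iota P m, pairing_sigma P m) \<in> P" using b by simp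
  have "\<forall>(i, s) \<in> P. i < s" using assms(1) by (simp add: pairing_def)
  then show "pairing_iota P m < pairing_sigma P m" using i by blast
qed

lemma P_eq:
  assumes "pairing n P"
  shows "P = (\<lambda>m. (pairing_iota P m, pairing_sigma P m)) ` {1..n}"
proof
  show "(\<lambda>m. (pairing_iota P m, pairing_sigma P m)) ` {1..n} \<subseteq> P" using sigma_props(1)[OF assms] by auto
  show "P \<subseteq> (\<lambda>m. (pairing_iota P m, pairing_sigma P m)) ` {1..n}"
  proof
    fix x assume x: "x \<in> P"
    then obtain m where m: "m \<in> {1..n}" "fst x = pairing_iota P m" using iota_props(3)[OF assms] by force
    have "x = (pairing_iota P m, pairing_sigma P m)"
      using inj_onD[OF pairing_basic(2)[OF assms], of x "(pairing_iota P m, pairing_sigma P m)"] sigma_props(1)[OF assms m(1)] x m(2) by simp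
    then show "x \<in> (\<lambda>m. (pairing_iota P m, pairing_sigma P m)) ` {1..n}" using m by blast
  qed
qed

definition hP :: "(nat \<times> nat) set \<Rightarrow> nat \<Rightarrow> nat" where
  "hP P k = (if even k then pairing_iota P (k div 2 + 1) else pairing_sigma P (k div 2 + 1))"

lemma hP_vals:
  assumes "m \<in> {1..n}"
  shows "hP P (2*m-2) = pairing_iota P m" "hP P (2*m-1) = pairing_sigma P m"
  using idx_even[OF assms] idx_odd[OF assms] by (auto simp: hP_def)

lemma hP_bij:
  assumes "pairing n P"
  shows "bij_betw (hP P) {..<2*n} {1..2*n}"
proof -
  have sn: "snd ` P = pairing_sigma P ` {1..n}"
    by (subst P_eq[OF assms]) (simp add: image_image)
  have "hP P ` {..<2*n} = pairing_iota P ` {1..n} \<union> pairing_sigma P ` {1..n}"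
  proof
    show "hP P ` {..<2*n} \<subseteq> pairing_iota P ` {1..n} \<union> pairing_sigma P ` {1..n}"
    proof
      fix x assume "x \<in> hP P ` {..<2*n}"
      then obtain k where k: "k < 2*n" "x = hP P k" by auto
      show "x \<in> pairing_iota P ` {1..n} \<union> pairing_sigma P ` {1..n}"
        using even_idx[OF k(1)] odd_idx[OF k(1)] k(2) by (cases "even k") (auto simp: hP_def)
    qed
    show "pairing_iota P ` {1..n} \<union> pairing_sigma P ` {1..n} \<subseteq> hP P ` {..<2*n}"
    proof
      fix x assume "x \<in> pairing_iota P ` {1..n} \<union> pairing_sigma P ` {1..n}"
      then obtain m where m: "m \<in> {1..n}" "x = pairing_iota P m \<or> x = pairing_sigma P m" by auto
      then show "x \<in> hP P ` {..<2*n}"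
        using hP_vals[OF m(1), of P] idx_even[OF m(1)] idx_odd[OF m(1)]
        by (metis image_eqI lessThan_iff)
    qed
  qed
  also have "\<dots> = {1..2*n}" using assms iota_props(3)[OF assms] sn by (simp add: pairing_def)
  finally have im: "hP P ` {..<2*n} = {1..2*n}" .
  then have "inj_on (hP P) {..<2*n}" by (simp add: inj_on_iff_eq_card)
  with im show ?thesis by (simp add: bij_betw_def)
qed

lemma pairing_arg_eq:
  "pairing_arg n P tt = (\<lambda>k\<in>{..<2*n}. tt (hP P k))"
  by (rule ext) (simp add: pairing_arg_def hP_def)

lemma pairings_finite: "finite {P. pairing n P}"
proof -
  have "{P. pairing n P} \<subseteq> Pow ({1..2*n} \<times> {1..2*n})" by (auto simp: pairing_def)
  then show ?thesis by (rule finite_subset) simp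
qed

definition Acond :: "nat \<Rightarrow> real \<Rightarrow> real \<Rightarrow> (nat \<Rightarrow> real) \<Rightarrow> bool" where
  "Acond n t0 t tt \<longleftrightarrow> t0 \<le> tt 1 \<and> (\<forall>i\<in>{1..<2*n}. tt i \<le> tt (i+1)) \<and> tt (2*n) \<le> t"

definition Ccond :: "nat \<Rightarrow> real \<Rightarrow> real \<Rightarrow> (nat \<Rightarrow> real) \<Rightarrow> bool" where
  "Ccond n t0 t y \<longleftrightarrow> t0 \<le> y 0 \<and> (\<forall>i\<in>{1..<n}. y (2*i-2) \<le> y (2*i)) \<and> y (2*n-2) \<le> t \<and>
     (\<forall>m\<in>{1..n}. y (2*m-2) \<le> y (2*m-1) \<and> y (2*m-1) \<le> t)"

definition Psi :: "nat \<Rightarrow> (nat \<times> nat) set \<Rightarrow> (nat \<Rightarrow> real) \<Rightarrow> (nat \<Rightarrow> real)" where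
  "Psi n P y = (\<lambda>i\<in>{1..2*n}. y (inv_into {..<2*n} (hP P) i))"

definition rk :: "nat \<Rightarrow> (nat \<Rightarrow> real) \<Rightarrow> nat \<Rightarrow> nat" where
  "rk n y k = card {j\<in>{..<2*n}. y j \<le> y k}"

definition Qy :: "nat \<Rightarrow> (nat \<Rightarrow> real) \<Rightarrow> (nat \<times> nat) set" where
  "Qy n y = (\<lambda>m. (rk n y (2*m-2), rk n y (2*m-1))) ` {1..n}"

lemma chain:
  fixes f :: "nat \<Rightarrow> real"
  assumes st: "\<forall>i\<in>{1..<N}. f i \<le> f (i+1)" and "1 \<le> i" "i \<le> j" "j \<le> N"
  shows "f i \<le> f j"
proof -
  have "j \<le> N \<longrightarrow> f i \<le> f j"
  proof (rule dec_induct[OF assms(3)])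
    show "i \<le> N \<longrightarrow> f i \<le> f i" by simp
  next
    fix k assume k: "i \<le> k" "k < j" "k \<le> N \<longrightarrow> f i \<le> f k"
    show "Suc k \<le> N \<longrightarrow> f i \<le> f (Suc k)"
    proof
      assume "Suc k \<le> N"
      then have "k \<in> {1..<N}" using k assms(2) by auto
      then have "f k \<le> f (k+1)" using st by blast
      then show "f i \<le> f (Suc k)" using k \<open>Suc k \<le> N\<close> by simp
    qed
  qed
  then show ?thesis using assms(4) by blast
qed

lemma J_split: "{..<2*(n::nat)} = (\<lambda>m. 2*m-2) ` {1..n} \<union> (\<lambda>m. 2*m-1) ` {1..n}"
proof
  show "{..<2*n} \<subseteq> (\<lambda>m. 2*m-2) ` {1..n} \<union> (\<lambda>m. 2*m-1) ` {1..n}"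
  proof
    fix k assume k: "k \<in> {..<2*n}"
    show "k \<in> (\<lambda>m. 2*m-2) ` {1..n} \<union> (\<lambda>m. 2*m-1) ` {1..n}"
    proof (cases "even k")
      case True
      with even_idx[of k n] k show ?thesis by blast
    next
      case False
      with odd_idx[of k n] k show ?thesis by blast
    qed
  qed
  show "(\<lambda>m. 2*m-2) ` {1..n} \<union> (\<lambda>m. 2*m-1) ` {1..n} \<subseteq> {..<2*n}"
    using idx_even idx_odd by fastforce
qed

lemma Psi_h:
  assumes "pairing n P" "k \<in> {..<2*n}"
  shows "Psi n P y (hP P k) = y k"
proof -
  have b: "bij_betw (hP P) {..<2*n} {1..2*n}" by (rule hP_bij[OF assms(1)])
  have "hP P k \<in> {1..2*n}" using b assms(2) by (auto simp: bij_betw_def)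
  moreover have "inv_into {..<2*n} (hP P) (hP P k) = k" using b assms(2) by (simp add: bij_betw_inv_into_left)
  ultimately show ?thesis by (simp add: Psi_def)
qed

lemma hP_range: "pairing n P \<Longrightarrow> k \<in> {..<2*n} \<Longrightarrow> hP P k \<in> {1..2*n}"
  using hP_bij[of n P] by (auto simp: bij_betw_def)

lemma A_to_C:
  assumes P: "pairing n P" and n: "n \<ge> 1" and A: "Acond n t0 t (Psi n P y)"
  shows "Ccond n t0 t y"
proof -
  define tt where "tt = Psi n P y"
  have st: "\<forall>i\<in>{1..<2*n}. tt i \<le> tt (i+1)" and t01: "t0 \<le> tt 1" and t2n: "tt (2*n) \<le> t"
    using A by (auto simp: Acond_def tt_def)
  have mono: "tt a \<le> tt b" if "a \<in> {1..2*n}" "b \<in> {1..2*n}" "a \<le> b" for a b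
    using chain[OF st, of a b] that by auto
  have lo: "t0 \<le> tt a" if "a \<in> {1..2*n}" for a using mono[of 1 a] that t01 n by auto
  have hi: "tt a \<le> t" if "a \<in> {1..2*n}" for a using mono[of a "2*n"] that t2n n by auto
  have yk: "y k = tt (hP P k)" if "k \<in> {..<2*n}" for k using Psi_h[OF P that] tt_def by simp
  have yin: "t0 \<le> y k \<and> y k \<le> t" if "k \<in> {..<2*n}" for k
    using yk[OF that] lo hi hP_range[OF P that] by auto
  have iI: "pairing_iota P m \<in> {1..2*n}" if "m \<in> {1..n}" for m
    using hP_range[OF P, of "2*m-2"] idx_even[OF that] hP_vals[OF that, of P] by auto
  have sI: "pairing_sigma P m \<in> {1..2*n}" if "m \<in> {1..n}" for m
    using hP_range[OF P, of "2*m-1"] idx_odd[OF that] hP_vals[OF that, of P] by auto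
  have ye: "y (2*m-2) = tt (pairing_iota P m)" if "m \<in> {1..n}" for m
    using yk[of "2*m-2"] idx_even[OF that] hP_vals[OF that, of P] by auto
  have yo: "y (2*m-1) = tt (pairing_sigma P m)" if "m \<in> {1..n}" for m
    using yk[of "2*m-1"] idx_odd[OF that] hP_vals[OF that, of P] by auto
  have c1: "t0 \<le> y 0" using yin[of 0] n by auto
  have c2: "y (2*i-2) \<le> y (2*i)" if "i \<in> {1..<n}" for i
  proof -
    have m1: "i \<in> {1..n}" "i+1 \<in> {1..n}" using that by auto
    have "y (2*i) = y (2*(i+1)-2)" by simp
    also have "\<dots> = tt (pairing_iota P (i+1))" by (rule ye[OF m1(2)])
    finally have e: "y (2*i) = tt (pairing_iota P (i+1))" .
    have "pairing_iota P i < pairing_iota P (i+1)" using iota_props(2)[OF P m1] by simp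
    then show ?thesis using e ye[OF m1(1)] mono iI m1 by simp
  qed
  have c3: "y (2*n-2) \<le> t" using yin[of "2*n-2"] n by auto
  have c4: "y (2*m-2) \<le> y (2*m-1) \<and> y (2*m-1) \<le> t" if "m \<in> {1..n}" for m
    using ye[OF that] yo[OF that] sigma_props(2)[OF P that] mono iI[OF that] sI[OF that]
      yin[of "2*m-1"] idx_odd[OF that] by auto
  show ?thesis using c1 c2 c3 c4 by (auto simp: Ccond_def)
qed


lemma J_cases:
  assumes k: "(k::nat) < 2*n"
    and e: "\<And>m. m \<in> {1..n} \<Longrightarrow> k = 2*m-2 \<Longrightarrow> Q"
    and o: "\<And>m. m \<in> {1..n} \<Longrightarrow> k = 2*m-1 \<Longrightarrow> Q"
  shows Q
proof (cases "even k")
  case True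
  then have "k div 2 + 1 \<in> {1..n} \<and> k = 2*(k div 2 + 1) - 2" using even_idx k by blast
  then show Q using e by blast
next
  case False
  then have "k div 2 + 1 \<in> {1..n} \<and> k = 2*(k div 2 + 1) - 1" using odd_idx k by blast
  then show Q using o by blast
qed

lemma C_bounds:
  assumes C: "Ccond n t0 t y" and k: "k \<in> {..<2*n}"
  shows "t0 \<le> y k \<and> y k \<le> t"
proof -
  define F where "F m = y (2*m-2)" for m
  have st: "\<forall>i\<in>{1..<n}. F i \<le> F (i+1)" using C by (auto simp: Ccond_def F_def)
  have F1: "t0 \<le> F 1" using C by (simp add: Ccond_def F_def)
  have Fo: "F m \<le> y (2*m-1) \<and> y (2*m-1) \<le> t" if "m \<in> {1..n}" for m using C that by (auto simp: Ccond_def F_def)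
  have Flo: "t0 \<le> F m" if "m \<in> {1..n}" for m using chain[OF st, of 1 m] F1 that by auto
  show ?thesis
  proof (rule J_cases[of k n])
    show "k < 2*n" using k by simp
  next
    fix m assume m: "m \<in> {1..n}" "k = 2*m-2"
    then show ?thesis using Flo[OF m(1)] Fo[OF m(1)] by (auto simp: F_def)
  next
    fix m assume m: "m \<in> {1..n}" "k = 2*m-1"
    then show ?thesis using Flo[OF m(1)] Fo[OF m(1)] by auto
  qed
qed

lemma rk_mono:
  assumes "a \<in> {..<2*n}" "b \<in> {..<2*n}" "y a < y b"
  shows "rk n y a < rk n y b"
proof -
  have s1: "{j\<in>{..<2*n}. y j \<le> y a} \<subseteq> {j\<in>{..<2*n}. y j \<le> y b}"
    using assms by auto
  have s2: "b \<in> {j\<in>{..<2*n}. y j \<le> y b}" "b \<notin> {j\<in>{..<2*n}. y j \<le> y a}" using assms by auto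
  have "{j\<in>{..<2*n}. y j \<le> y a} \<subset> {j\<in>{..<2*n}. y j \<le> y b}"
    using s1 s2 by blast
  then show ?thesis unfolding rk_def by (intro psubset_card_mono) auto
qed

lemma rk_rev:
  assumes inj: "inj_on y {..<2*n}" and "a \<in> {..<2*n}" "b \<in> {..<2*n}" "rk n y a < rk n y b"
  shows "y a < y b"
proof (rule ccontr)
  assume "\<not> y a < y b"
  then have "y b < y a \<or> y b = y a" by auto
  then show False
  proof
    assume "y b < y a" then show False using rk_mono[of b n a y] assms by simp
  next
    assume "y b = y a" then have "a = b" using inj assms(2,3) by (auto dest: inj_onD)
    then show False using assms(4) by simp
  qed
qed

lemma rk_range:
  assumes "k \<in> {..<2*n}"
  shows "rk n y k \<in> {1..2*n}"
proof -
  have "k \<in> {j\<in>{..<2*n}. y j \<le> y k}" using assms by simp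
  moreover have "finite {j\<in>{..<2*n}. y j \<le> y k}" by simp
  ultimately have "card {j\<in>{..<2*n}. y j \<le> y k} > 0" using card_gt_0_iff by blast
  then have "card {j\<in>{..<2*n}. y j \<le> y k} \<ge> 1" by simp
  moreover have "card {j\<in>{..<2*n}. y j \<le> y k} \<le> card {..<2*n}" by (intro card_mono) auto
  ultimately show ?thesis by (simp add: rk_def)
qed

lemma rk_bij:
  assumes inj: "inj_on y {..<2*n}"
  shows "bij_betw (rk n y) {..<2*n} {1..2*n}"
proof -
  have ij: "inj_on (rk n y) {..<2*n}"
  proof (rule inj_onI)
    fix a b assume ab: "a \<in> {..<2*n}" "b \<in> {..<2*n}" "rk n y a = rk n y b"
    show "a = b"
    proof (rule ccontr)
      assume "a \<noteq> b"
      then have "y a \<noteq> y b" using inj ab by (auto dest: inj_onD)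
      then have "y a < y b \<or> y b < y a" by auto
      then show False using rk_mono[of a n b y] rk_mono[of b n a y] ab by auto
    qed
  qed
  have sub: "rk n y ` {..<2*n} \<subseteq> {1..2*n}" using rk_range by auto
  have "card (rk n y ` {..<2*n}) = card {1..2*n}" using ij by (simp add: card_image)
  then have "rk n y ` {..<2*n} = {1..2*n}" using sub by (intro card_subset_eq) auto
  with ij show ?thesis by (simp add: bij_betw_def)
qed

lemma C_strict:
  assumes inj: "inj_on y {..<2*n}" and C: "Ccond n t0 t y"
  shows "\<And>m m'. m \<in> {1..n} \<Longrightarrow> m' \<in> {1..n} \<Longrightarrow> m < m' \<Longrightarrow> y (2*m-2) < y (2*m'-2)"
    "\<And>m. m \<in> {1..n} \<Longrightarrow> y (2*m-2) < y (2*m-1)"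
proof -
  define F where "F m = y (2*m-2)" for m
  have st: "\<forall>i\<in>{1..<n}. F i \<le> F (i+1)" using C by (auto simp: Ccond_def F_def)
  fix m m' assume m: "m \<in> {1..n}" "m' \<in> {1..n}" "m < m'"
  have le: "F m \<le> F m'" using chain[OF st, of m m'] m by auto
  have "2*m-2 \<noteq> 2*m'-2" using m by auto
  then have "y (2*m-2) \<noteq> y (2*m'-2)" using inj idx_even[OF m(1)] idx_even[OF m(2)] by (auto dest: inj_onD)
  then show "y (2*m-2) < y (2*m'-2)" using le by (auto simp: F_def)
next
  fix m assume m: "m \<in> {1..n}"
  have le: "y (2*m-2) \<le> y (2*m-1)" using C m by (auto simp: Ccond_def)
  have "2*m-2 \<noteq> 2*m-1" using m by auto
  then have "y (2*m-2) \<noteq> y (2*m-1)" using inj idx_even[OF m] idx_odd[OF m] by (auto dest: inj_onD)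
  then show "y (2*m-2) < y (2*m-1)" using le by auto
qed

lemma Qy_pairing:
  assumes inj: "inj_on y {..<2*n}" and C: "Ccond n t0 t y"
  shows "pairing n (Qy n y)"
    "\<And>m. m \<in> {1..n} \<Longrightarrow> pairing_iota (Qy n y) m = rk n y (2*m-2)"
    "\<And>m. m \<in> {1..n} \<Longrightarrow> pairing_sigma (Qy n y) m = rk n y (2*m-1)"
proof -
  define f where "f m = rk n y (2*m-2)" for m
  define g where "g m = rk n y (2*m-1)" for m
  have Q: "Qy n y = (\<lambda>m. (f m, g m)) ` {1..n}" by (simp add: Qy_def f_def g_def)
  have fs: "f m < f m'" if "m \<in> {1..n}" "m' \<in> {1..n}" "m < m'" for m m'
  proof -
    have a: "2*m-2 \<in> {..<2*n}" "2*m'-2 \<in> {..<2*n}" using idx_even[OF that(1)] idx_even[OF that(2)] by auto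
    show ?thesis unfolding f_def by (rule rk_mono[OF a C_strict(1)[OF inj C that]])
  qed
  have fg: "f m < g m" if "m \<in> {1..n}" for m
  proof -
    have a: "2*m-2 \<in> {..<2*n}" "2*m-1 \<in> {..<2*n}" using idx_even[OF that] idx_odd[OF that] by auto
    show ?thesis unfolding f_def g_def by (rule rk_mono[OF a C_strict(2)[OF inj C that]])
  qed
  have finj: "inj_on f {1..n}"
  proof (rule inj_onI)
    fix a b assume ab: "a \<in> {1..n}" "b \<in> {1..n}" "f a = f b"
    show "a = b"
    proof (rule ccontr)
      assume "a \<noteq> b"
      then have "a < b \<or> b < a" by arith
      then show False using fs[of a b] fs[of b a] ab by auto
    qed
  qed
  have pinj: "inj_on (\<lambda>m. (f m, g m)) {1..n}"
  proof (rule inj_onI)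
    fix a b assume "a \<in> {1..n}" "b \<in> {1..n}" "(f a, g a) = (f b, g b)"
    then show "a = b" using inj_onD[OF finj] by simp
  qed
  have rkJ: "rk n y ` {..<2*n} = {1..2*n}" using rk_bij[OF inj] by (simp add: bij_betw_def)
  have fst: "fst ` Qy n y = f ` {1..n}" unfolding Q by (simp add: image_image)
  have snd: "snd ` Qy n y = g ` {1..n}" unfolding Q by (simp add: image_image)
  have "rk n y ` {..<2*n} = rk n y ` ((\<lambda>m. 2*m-2) ` {1..n} \<union> (\<lambda>m. 2*m-1) ` {1..n})"
    using J_split[of n] by simp
  also have "\<dots> = f ` {1..n} \<union> g ` {1..n}" unfolding image_Un image_image f_def g_def by (rule refl)
  finally have "f ` {1..n} \<union> g ` {1..n} = rk n y ` {..<2*n}" by simp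
  then have U: "fst ` Qy n y \<union> snd ` Qy n y = {1..2*n}" using fst snd rkJ by simp
  have sub: "Qy n y \<subseteq> {1..2*n} \<times> {1..2*n}"
  proof
    fix x assume "x \<in> Qy n y"
    then obtain m where m: "m \<in> {1..n}" "x = (f m, g m)" unfolding Q by blast
    have "2*m-2 \<in> {..<2*n}" "2*m-1 \<in> {..<2*n}" using idx_even[OF m(1)] idx_odd[OF m(1)] by auto
    then show "x \<in> {1..2*n} \<times> {1..2*n}" using m rk_range unfolding f_def g_def by blast
  qed
  have cQ: "card (Qy n y) = n" unfolding Q using pinj by (simp add: card_image)
  have lt: "\<forall>(i, s) \<in> Qy n y. i < s" unfolding Q using fg by auto
  show P: "pairing n (Qy n y)" using sub cQ lt U by (simp add: pairing_def)
  define L where "L = map (\<lambda>i. f (i+1)) [0..<n]"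
  have setL: "set L = f ` {1..n}"
  proof
    show "set L \<subseteq> f ` {1..n}"
    proof
      fix x assume "x \<in> set L"
      then obtain i where i: "i < n" "x = f (i+1)" unfolding L_def by auto
      then have "i + 1 \<in> {1..n}" by simp
      then show "x \<in> f ` {1..n}" using i(2) by (rule rev_image_eqI)
    qed
    show "f ` {1..n} \<subseteq> set L"
    proof
      fix x assume "x \<in> f ` {1..n}"
      then obtain m where m: "m \<in> {1..n}" "x = f m" by blast
      then have "m - 1 \<in> set [0..<n]" "x = f (m - 1 + 1)" by auto
      then have "x \<in> (\<lambda>i. f (i+1)) ` set [0..<n]" by (rule rev_image_eqI)
      then show "x \<in> set L" unfolding L_def by simp
    qed
  qed
  have "sorted_list_of_set (fst ` Qy n y) = L"
  proof (subst sorted_list_of_set_unique[symmetric])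
    show "finite (fst ` Qy n y)" using fst by simp
    have "sorted_wrt (<) L" unfolding L_def sorted_wrt_iff_nth_less
    proof (intro allI impI)
      fix i j assume "i < j" "j < length (map (\<lambda>i. f (i+1)) [0..<n])"
      then show "map (\<lambda>i. f (i+1)) [0..<n] ! i < map (\<lambda>i. f (i+1)) [0..<n] ! j"
        using fs[of "i+1" "j+1"] by simp
    qed
    moreover have "set L = fst ` Qy n y" using setL fst by simp
    moreover have "length L = card (fst ` Qy n y)" unfolding fst using finj by (simp add: card_image L_def)
    ultimately show "sorted_wrt (<) L \<and> set L = fst ` Qy n y \<and> length L = card (fst ` Qy n y)" by blast
  qed
  then show io: "pairing_iota (Qy n y) m = rk n y (2*m-2)" if "m \<in> {1..n}" for m
  proof -
    have "m - 1 < n" "m - 1 + 1 = m" "2*(m-1) = 2*m-2" using that by auto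
    then show ?thesis using \<open>sorted_list_of_set (fst ` Qy n y) = L\<close>
      by (simp add: pairing_iota_def L_def f_def)
  qed
  show "pairing_sigma (Qy n y) m = rk n y (2*m-1)" if m: "m \<in> {1..n}" for m
  proof -
    have mem: "(f m, g m) \<in> Qy n y" using Q m by blast
    have "(pairing_iota (Qy n y) m, pairing_sigma (Qy n y) m) \<in> Qy n y" by (rule sigma_props(1)[OF P m])
    then have "(f m, pairing_sigma (Qy n y) m) \<in> Qy n y" using io[OF m] by (simp add: f_def)
    then have "(f m, pairing_sigma (Qy n y) m) = (f m, g m)"
      using inj_onD[OF pairing_basic(2)[OF P], of "(f m, pairing_sigma (Qy n y) m)" "(f m, g m)"] mem by simp
    then show ?thesis by (simp add: g_def)
  qed
qed

lemma hP_Qy: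
  assumes inj: "inj_on y {..<2*n}" and C: "Ccond n t0 t y" and k: "k \<in> {..<2*n}"
  shows "hP (Qy n y) k = rk n y k"
proof (rule J_cases[of k n])
  show "k < 2*n" using k by simp
next
  fix m assume m: "m \<in> {1..n}" "k = 2*m-2"
  then show ?thesis using hP_vals(1)[OF m(1)] Qy_pairing(2)[OF inj C m(1)] by simp
next
  fix m assume m: "m \<in> {1..n}" "k = 2*m-1"
  then show ?thesis using hP_vals(2)[OF m(1)] Qy_pairing(3)[OF inj C m(1)] by simp
qed

lemma C_to_A:
  assumes inj: "inj_on y {..<2*n}" and C: "Ccond n t0 t y" and n: "n \<ge> 1"
  shows "Acond n t0 t (Psi n (Qy n y) y)"
proof -
  have P: "pairing n (Qy n y)" by (rule Qy_pairing(1)[OF inj C])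
  have b: "bij_betw (hP (Qy n y)) {..<2*n} {1..2*n}" by (rule hP_bij[OF P])
  have ex: "\<exists>j\<in>{..<2*n}. rk n y j = i \<and> Psi n (Qy n y) y i = y j" if i: "i \<in> {1..2*n}" for i
  proof -
    define j where "j = inv_into {..<2*n} (hP (Qy n y)) i"
    have j: "j \<in> {..<2*n}" "hP (Qy n y) j = i" unfolding j_def
      using bij_betw_apply[OF bij_betw_inv_into[OF b] i] bij_betw_inv_into_right[OF b i] by auto
    then have "rk n y j = i" using hP_Qy[OF inj C j(1)] by simp
    moreover have "Psi n (Qy n y) y i = y j" using i by (simp add: Psi_def j_def)
    ultimately show ?thesis using j by blast
  qed
  have lo: "t0 \<le> Psi n (Qy n y) y i" and hi: "Psi n (Qy n y) y i \<le> t" if "i \<in> {1..2*n}" for i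
    using ex[OF that] C_bounds[OF C] by auto
  have st: "Psi n (Qy n y) y i \<le> Psi n (Qy n y) y (i+1)" if "i \<in> {1..<2*n}" for i
  proof -
    have i1: "i \<in> {1..2*n}" "i+1 \<in> {1..2*n}" using that by auto
    obtain j where j: "j \<in> {..<2*n}" "rk n y j = i" "Psi n (Qy n y) y i = y j" using ex[OF i1(1)] by blast
    obtain j' where j': "j' \<in> {..<2*n}" "rk n y j' = i+1" "Psi n (Qy n y) y (i+1) = y j'" using ex[OF i1(2)] by blast
    have "y j < y j'" using rk_rev[OF inj j(1) j'(1)] j j' by simp
    then show ?thesis using j j' by simp
  qed
  show ?thesis unfolding Acond_def using lo[of 1] hi[of "2*n"] st n by auto
qed

lemma A_unique:
  assumes inj: "inj_on y {..<2*n}" and P: "pairing n P" and A: "Acond n t0 t (Psi n P y)"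
  shows "P = Qy n y"
proof -
  define h where "h = hP P"
  define tt where "tt = Psi n P y"
  have b: "bij_betw h {..<2*n} {1..2*n}" unfolding h_def by (rule hP_bij[OF P])
  have st: "\<forall>i\<in>{1..<2*n}. tt i \<le> tt (i+1)" using A by (auto simp: Acond_def tt_def)
  have mono: "tt a \<le> tt b" if "a \<in> {1..2*n}" "b \<in> {1..2*n}" "a \<le> b" for a b
    using chain[OF st, of a b] that by auto
  have yk: "y k = tt (h k)" if "k \<in> {..<2*n}" for k using Psi_h[OF P that] tt_def h_def by simp
  have ttinj: "tt a \<noteq> tt b" if "a \<in> {1..2*n}" "b \<in> {1..2*n}" "a \<noteq> b" for a b
  proof -
    define ja where "ja = inv_into {..<2*n} h a"
    define jb where "jb = inv_into {..<2*n} h b"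
    have ja: "ja \<in> {..<2*n}" "h ja = a" unfolding ja_def
      using bij_betw_apply[OF bij_betw_inv_into[OF b] that(1)] bij_betw_inv_into_right[OF b that(1)] by auto
    have jb: "jb \<in> {..<2*n}" "h jb = b" unfolding jb_def
      using bij_betw_apply[OF bij_betw_inv_into[OF b] that(2)] bij_betw_inv_into_right[OF b that(2)] by auto
    have "ja \<noteq> jb" using ja jb that(3) by auto
    then have "y ja \<noteq> y jb" using inj ja jb by (auto dest: inj_onD)
    then show ?thesis using yk[OF ja(1)] yk[OF jb(1)] ja jb by simp
  qed
  have hr: "h k \<in> {1..2*n}" if "k \<in> {..<2*n}" for k using b that by (auto simp: bij_betw_def)
  have iff: "tt (h j) \<le> tt (h k) \<longleftrightarrow> h j \<le> h k" if "j \<in> {..<2*n}" "k \<in> {..<2*n}" for j k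
  proof
    assume le: "tt (h j) \<le> tt (h k)"
    show "h j \<le> h k"
    proof (rule ccontr)
      assume "\<not> h j \<le> h k"
      then have hh: "h k \<le> h j" "h k \<noteq> h j" by auto
      have "tt (h k) \<le> tt (h j)" by (rule mono[OF hr[OF that(2)] hr[OF that(1)] hh(1)])
      moreover have "tt (h k) \<noteq> tt (h j)" by (rule ttinj[OF hr[OF that(2)] hr[OF that(1)] hh(2)])
      ultimately show False using le by simp
    qed
  next
    assume "h j \<le> h k" then show "tt (h j) \<le> tt (h k)" by (rule mono[OF hr[OF that(1)] hr[OF that(2)]])
  qed
  have rkh: "rk n y k = h k" if k: "k \<in> {..<2*n}" for k
  proof -
    have "{j\<in>{..<2*n}. y j \<le> y k} = {j\<in>{..<2*n}. h j \<le> h k}"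
    proof (rule Collect_cong)
      fix j
      show "(j \<in> {..<2*n} \<and> y j \<le> y k) = (j \<in> {..<2*n} \<and> h j \<le> h k)"
      proof (cases "j \<in> {..<2*n}")
        case True
        then show ?thesis using iff[OF True k] yk[OF True] yk[OF k] by simp
      qed simp
    qed
    then have "rk n y k = card {j\<in>{..<2*n}. h j \<le> h k}" by (simp add: rk_def)
    also have "\<dots> = card (h ` {j\<in>{..<2*n}. h j \<le> h k})"
    proof (rule card_image[symmetric])
      show "inj_on h {j\<in>{..<2*n}. h j \<le> h k}"
        using b unfolding bij_betw_def by (rule inj_on_subset[OF conjunct1]) blast
    qed
    also have "h ` {j\<in>{..<2*n}. h j \<le> h k} = {1..h k}"
    proof
      show "h ` {j\<in>{..<2*n}. h j \<le> h k} \<subseteq> {1..h k}"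
      proof
        fix i assume "i \<in> h ` {j\<in>{..<2*n}. h j \<le> h k}"
        then obtain j where "j \<in> {..<2*n}" "h j \<le> h k" "i = h j" by blast
        then show "i \<in> {1..h k}" using hr[of j] by auto
      qed
      show "{1..h k} \<subseteq> h ` {j\<in>{..<2*n}. h j \<le> h k}"
      proof
        fix i assume i: "i \<in> {1..h k}"
        then have "i \<in> {1..2*n}" using hr[OF k] by auto
        then have "i \<in> h ` {..<2*n}" using b by (simp add: bij_betw_def)
        then obtain j where "j \<in> {..<2*n}" "h j = i" by blast
        then show "i \<in> h ` {j\<in>{..<2*n}. h j \<le> h k}" using i by auto
      qed
    qed
    finally show ?thesis by simp
  qed
  have "P = (\<lambda>m. (pairing_iota P m, pairing_sigma P m)) ` {1..n}" by (rule P_eq[OF P])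
  also have "\<dots> = (\<lambda>m. (rk n y (2*m-2), rk n y (2*m-1))) ` {1..n}"
  proof (rule image_cong[OF refl])
    fix m assume m: "m \<in> {1..n}"
    show "(pairing_iota P m, pairing_sigma P m) = (rk n y (2*m-2), rk n y (2*m-1))"
      using rkh[of "2*m-2"] rkh[of "2*m-1"] idx_even[OF m] idx_odd[OF m] hP_vals[OF m, of P]
      by (simp add: h_def)
  qed
  finally show ?thesis by (simp add: Qy_def)
qed

lemma psf: "product_sigma_finite (\<lambda>_::nat. lborel::real measure)"
  by (simp add: product_sigma_finite_def lborel.sigma_finite_measure_axioms)

lemma reindex_distr:
  assumes fJ: "finite J" and bij: "bij_betw k J I"
  shows "distr (lebR I) (lebR J) (\<lambda>x. \<lambda>j\<in>J. x (k j)) = lebR J"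
proof -
  interpret product_sigma_finite "\<lambda>_::nat. lborel::real measure" by (rule psf)
  have fI: "finite I" using bij fJ bij_betw_finite by blast
  have kI: "j \<in> J \<Longrightarrow> k j \<in> I" for j using bij by (auto simp: bij_betw_def)
  have meas: "(\<lambda>x. \<lambda>j\<in>J. x (k j)) \<in> lebR I \<rightarrow>\<^sub>M lebR J"
    using kI by (intro measurable_restrict measurable_component_singleton) auto
  show ?thesis
  proof (rule PiM_eqI)
    show "finite J" by fact
    show "sets (distr (lebR I) (lebR J) (\<lambda>x. \<lambda>j\<in>J. x (k j))) = sets (lebR J)" by simp
    fix A :: "nat \<Rightarrow> real set" assume A: "\<And>i. i \<in> J \<Longrightarrow> A i \<in> sets lborel"
    have invJ: "i \<in> I \<Longrightarrow> inv_into J k i \<in> J" for i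
      using bij by (metis bij_betw_def inv_into_into)
    have kinv: "i \<in> I \<Longrightarrow> k (inv_into J k i) = i" for i
      using bij by (simp add: bij_betw_inv_into_right)
    have invk: "j \<in> J \<Longrightarrow> inv_into J k (k j) = j" for j
      using bij by (simp add: bij_betw_inv_into_left)
    have pre: "(\<lambda>x. \<lambda>j\<in>J. x (k j)) -` PiE J A \<inter> space (lebR I) = PiE I (\<lambda>i. A (inv_into J k i))"
    proof (intro set_eqI iffI)
      fix x assume x: "x \<in> (\<lambda>x. \<lambda>j\<in>J. x (k j)) -` PiE J A \<inter> space (lebR I)"
      show "x \<in> PiE I (\<lambda>i. A (inv_into J k i))"
        using x invJ kinv by (force simp: space_PiM PiE_iff)
    next
      fix x assume x: "x \<in> PiE I (\<lambda>i. A (inv_into J k i))"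
      show "x \<in> (\<lambda>x. \<lambda>j\<in>J. x (k j)) -` PiE J A \<inter> space (lebR I)"
        using x kI invk by (force simp: space_PiM PiE_iff)
    qed
    have "emeasure (distr (lebR I) (lebR J) (\<lambda>x. \<lambda>j\<in>J. x (k j))) (PiE J A)
        = emeasure (lebR I) (PiE I (\<lambda>i. A (inv_into J k i)))"
      using meas A by (subst emeasure_distr) (auto simp: pre intro!: sets_PiM_I_finite fJ)
    also have "\<dots> = (\<Prod>i\<in>I. emeasure lborel (A (inv_into J k i)))"
      using fI A invJ by (subst emeasure_PiM) auto
    also have "\<dots> = (\<Prod>j\<in>J. emeasure lborel (A j))"
      using prod.reindex_bij_betw[OF bij, of "\<lambda>i. emeasure lborel (A (inv_into J k i))"] invk
      by (auto intro: prod.cong)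
    finally show "emeasure (distr (lebR I) (lebR J) (\<lambda>x. \<lambda>j\<in>J. x (k j))) (PiE J A) = (\<Prod>j\<in>J. emeasure lborel (A j))" .
  qed
qed

definition Theta :: "nat \<Rightarrow> (nat \<Rightarrow> real) \<times> (nat \<Rightarrow> real) \<Rightarrow> (nat \<Rightarrow> real)" where
  "Theta n p = (\<lambda>k\<in>{..<2*n}. if even k then fst p (k div 2 + 1) else snd p (k div 2 + 1))"

lemma prod_pairs:
  fixes f :: "nat \<Rightarrow> 'a::comm_monoid_mult"
  shows "(\<Prod>m\<in>{1..n}. f (2*m-2)) * (\<Prod>m\<in>{1..n}. f (2*m-1)) = (\<Prod>k<2*n. f k)"
proof (induction n)
  case 0 then show ?case by simp
next
  case (Suc n)
  have e: "{..<2 * Suc n} = insert (2*n+1) (insert (2*n) {..<2*n})" by auto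
  have "(\<Prod>k<2*Suc n. f k) = f (2*n+1) * (f (2*n) * (\<Prod>k<2*n. f k))"
    unfolding e by (subst prod.insert; simp)+
  also have "\<dots> = f (2*n+1) * (f (2*n) * ((\<Prod>m\<in>{1..n}. f (2*m-2)) * (\<Prod>m\<in>{1..n}. f (2*m-1))))"
    by (simp only: Suc.IH)
  also have "\<dots> = (\<Prod>m\<in>{1..Suc n}. f (2*m-2)) * (\<Prod>m\<in>{1..Suc n}. f (2*m-1))"
    by (simp add: prod.cl_ivl_Suc mult_ac)
  finally show ?case by simp
qed

lemma Theta_meas: "Theta n \<in> lebR {1..n} \<Otimes>\<^sub>M lebR {1..n} \<rightarrow>\<^sub>M lebR {..<2*n}"
  unfolding Theta_def
proof (intro measurable_restrict)
  fix k assume k: "k \<in> {..<2*n}"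
  show "(\<lambda>p. if even k then fst p (k div 2 + 1) else snd p (k div 2 + 1)) \<in> lebR {1..n} \<Otimes>\<^sub>M lebR {1..n} \<rightarrow>\<^sub>M lborel"
  proof (cases "even k")
    case True
    then show ?thesis using even_idx[of k n] k
      by (simp add: measurable_compose[OF measurable_fst measurable_component_singleton])
  next
    case False
    then show ?thesis using odd_idx[of k n] k
      by (simp add: measurable_compose[OF measurable_snd measurable_component_singleton])
  qed
qed

lemma Theta_distr: "distr (lebR {1..n} \<Otimes>\<^sub>M lebR {1..n}) (lebR {..<2*n}) (Theta n) = lebR {..<2*n}"
proof -
  interpret product_sigma_finite "\<lambda>_::nat. lborel::real measure" by (rule psf)
  interpret sf: sigma_finite_measure "lebR {1..n}" by (rule sigma_finite) simp
  show ?thesis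
  proof (rule PiM_eqI)
    show "finite {..<2*n}" by simp
    show "sets (distr (lebR {1..n} \<Otimes>\<^sub>M lebR {1..n}) (lebR {..<2*n}) (Theta n)) = sets (lebR {..<2*n})" by simp
    fix A :: "nat \<Rightarrow> real set" assume A: "\<And>i. i \<in> {..<2*n} \<Longrightarrow> A i \<in> sets lborel"
    have pre: "Theta n -` PiE {..<2*n} A \<inter> space (lebR {1..n} \<Otimes>\<^sub>M lebR {1..n})
       = PiE {1..n} (\<lambda>m. A (2*m-2)) \<times> PiE {1..n} (\<lambda>m. A (2*m-1))"
    proof (intro set_eqI iffI)
      fix p assume p: "p \<in> Theta n -` PiE {..<2*n} A \<inter> space (lebR {1..n} \<Otimes>\<^sub>M lebR {1..n})"
      then have h: "\<And>k. k < 2*n \<Longrightarrow> (if even k then fst p (k div 2 + 1) else snd p (k div 2 + 1)) \<in> A k"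
        and sp: "fst p \<in> extensional {1..n}" "snd p \<in> extensional {1..n}"
        by (auto simp: Theta_def PiE_iff space_pair_measure space_PiM)
      have "fst p m \<in> A (2*m-2)" if "m \<in> {1..n}" for m using h[of "2*m-2"] idx_even[OF that] by simp
      moreover have "snd p m \<in> A (2*m-1)" if "m \<in> {1..n}" for m using h[of "2*m-1"] idx_odd[OF that] by simp
      ultimately show "p \<in> PiE {1..n} (\<lambda>m. A (2*m-2)) \<times> PiE {1..n} (\<lambda>m. A (2*m-1))"
        using sp by (cases p) (auto simp: PiE_iff)
    next
      fix p assume p: "p \<in> PiE {1..n} (\<lambda>m. A (2*m-2)) \<times> PiE {1..n} (\<lambda>m. A (2*m-1))"
      have "Theta n p k \<in> A k" if "k < 2*n" for k
      proof (cases "even k")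
        case True
        have pm: "\<forall>m\<in>{1..n}. fst p m \<in> A (2*m-2)" using p by (auto simp: PiE_iff)
        have "fst p (k div 2 + 1) \<in> A (2*(k div 2 + 1) - 2)" using pm even_idx[OF that True] by blast
        with even_idx[OF that True] True that show ?thesis
          by (simp add: Theta_def)
      next
        case False
        have pm: "\<forall>m\<in>{1..n}. snd p m \<in> A (2*m-1)" using p by (auto simp: PiE_iff)
        have "snd p (k div 2 + 1) \<in> A (2*(k div 2 + 1) - 1)" using pm odd_idx[OF that False] by blast
        with odd_idx[OF that False] False that show ?thesis
          by (simp add: Theta_def)
      qed
      then show "p \<in> Theta n -` PiE {..<2*n} A \<inter> space (lebR {1..n} \<Otimes>\<^sub>M lebR {1..n})"
        using p by (auto simp: Theta_def PiE_iff space_pair_measure space_PiM)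
    qed
    have AA: "\<And>m. m \<in> {1..n} \<Longrightarrow> A (2*m-2) \<in> sets lborel" "\<And>m. m \<in> {1..n} \<Longrightarrow> A (2*m-1) \<in> sets lborel"
      using A idx_even idx_odd by auto
    have "emeasure (distr (lebR {1..n} \<Otimes>\<^sub>M lebR {1..n}) (lebR {..<2*n}) (Theta n)) (PiE {..<2*n} A)
       = emeasure (lebR {1..n} \<Otimes>\<^sub>M lebR {1..n}) (PiE {1..n} (\<lambda>m. A (2*m-2)) \<times> PiE {1..n} (\<lambda>m. A (2*m-1)))"
      unfolding pre[symmetric] using A by (intro emeasure_distr[OF Theta_meas] sets_PiM_I_finite) auto
    also have "\<dots> = emeasure (lebR {1..n}) (PiE {1..n} (\<lambda>m. A (2*m-2))) * emeasure (lebR {1..n}) (PiE {1..n} (\<lambda>m. A (2*m-1)))"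
      using AA by (intro sf.emeasure_pair_measure_Times sets_PiM_I_finite) auto
    also have "\<dots> = (\<Prod>m\<in>{1..n}. emeasure lborel (A (2*m-2))) * (\<Prod>m\<in>{1..n}. emeasure lborel (A (2*m-1)))"
      using AA by (subst emeasure_PiM, simp, simp)+ (rule refl)
    also have "\<dots> = (\<Prod>k<2*n. emeasure lborel (A k))" by (rule prod_pairs)
    finally show "emeasure (distr (lebR {1..n} \<Otimes>\<^sub>M lebR {1..n}) (lebR {..<2*n}) (Theta n)) (PiE {..<2*n} A) = (\<Prod>k\<in>{..<2*n}. emeasure lborel (A k))" .
  qed
qed

lemma tie_AE:
  assumes fJ: "finite J" and ij: "i \<in> J" "j \<in> J" "i \<noteq> j"
  shows "AE y in lebR J. y i \<noteq> y j"
proof -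
  interpret product_sigma_finite "\<lambda>_::nat. lborel::real measure" by (rule psf)
  define N where "N = {y \<in> space (lebR J). y i = y j}"
  have Nm: "N \<in> sets (lebR J)" unfolding N_def
    using ij by (intro borel_measurable_eq measurable_component_singleton) auto
  have J: "insert i (J - {i}) = J" using ij by auto
  have Nm': "indicator N \<in> borel_measurable (lebR (insert i (J - {i})))" using Nm J by simp
  have "emeasure (lebR J) N = (\<integral>\<^sup>+ y. indicator N y \<partial>lebR J)" using Nm by (simp add: nn_integral_indicator)
  also have "\<dots> = (\<integral>\<^sup>+ y. indicator N y \<partial>lebR (insert i (J - {i})))" using J by simp
  also have "\<dots> = (\<integral>\<^sup>+ x. (\<integral>\<^sup>+ z. indicator N (x(i := z)) \<partial>lborel) \<partial>lebR (J - {i}))"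
    using fJ by (intro product_nn_integral_insert Nm') auto
  also have "\<dots> = (\<integral>\<^sup>+ x. (\<integral>\<^sup>+ z. indicator {x j} z \<partial>lborel) \<partial>lebR (J - {i}))"
  proof (rule nn_integral_cong)
    fix x assume x: "x \<in> space (lebR (J - {i}))"
    show "(\<integral>\<^sup>+ z. indicator N (x(i := z)) \<partial>lborel) = (\<integral>\<^sup>+ z. indicator {x j} z \<partial>lborel)"
    proof (rule nn_integral_cong)
      fix z :: real
      have "x(i := z) \<in> space (lebR J)" using x ij by (auto simp: space_PiM PiE_iff extensional_def)
      then have "x(i := z) \<in> N \<longleftrightarrow> z = x j" using ij by (auto simp: N_def)
      then show "indicator N (x(i := z)) = (indicator {x j} z :: ennreal)" by (auto simp: indicator_def)
    qed
  qed
  also have "\<dots> = 0" by (simp add: emeasure_lborel_singleton)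
  finally have "N \<in> null_sets (lebR J)" using Nm by auto
  then show ?thesis by (rule AE_I') (auto simp: N_def)
qed

lemma inj_AE:
  assumes fJ: "finite J"
  shows "AE y in lebR J. inj_on y J"
proof -
  have "AE y in lebR J. \<forall>i\<in>J. \<forall>j\<in>J. i \<noteq> j \<longrightarrow> y i \<noteq> y j"
  proof (intro AE_finite_allI fJ)
    fix i j assume "i \<in> J" "j \<in> J"
    then show "AE y in lebR J. i \<noteq> j \<longrightarrow> y i \<noteq> y j"
      using tie_AE[OF fJ, of i j] by (cases "i = j") auto
  qed
  then show ?thesis by eventually_elim (auto simp: inj_on_def)
qed

lemma g_meas:
  assumes loc: "locally_integrable_2n n g"
  shows "g \<in> borel_measurable (lebR {..<2*n})"
proof (rule borel_measurable_LIMSEQ_real)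
  define u where "u R x = indicator {x. \<forall>i<2*n. \<bar>x i\<bar> \<le> real R} x *\<^sub>R g x" for R :: nat and x
  show "(\<lambda>x. (u R) x) \<in> borel_measurable (lebR {..<2*n})" for R
    using loc unfolding locally_integrable_2n_def set_integrable_def u_def
    by (intro borel_measurable_integrable) blast
  fix x :: "nat \<Rightarrow> real"
  define N where "N = nat \<lceil>\<Sum>i<2*n. \<bar>x i\<bar>\<rceil>"
  have "\<forall>R\<ge>N. u R x = g x"
  proof (intro allI impI)
    fix R assume R: "R \<ge> N"
    have "\<bar>x i\<bar> \<le> real R" if "i < 2*n" for i
    proof -
      have "\<bar>x i\<bar> \<le> (\<Sum>i<2*n. \<bar>x i\<bar>)" using that by (intro member_le_sum) auto
      also have "\<dots> \<le> real N" unfolding N_def by linarith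
      also have "\<dots> \<le> real R" using R by simp
      finally show ?thesis .
    qed
    then show "u R x = g x" by (simp add: u_def)
  qed
  then have "eventually (\<lambda>R. u R x = g x) sequentially" by (auto simp: eventually_sequentially)
  then show "(\<lambda>R. u R x) \<longlonglongrightarrow> g x" by (rule tendsto_eventually)
qed

lemma Theta_vals:
  assumes "m \<in> {1..n}"
  shows "Theta n p (2*m-2) = fst p m" "Theta n p (2*m-1) = snd p m"
  using idx_even[OF assms] idx_odd[OF assms] by (auto simp: Theta_def)

lemma Theta_Ccond:
  assumes n: "n \<ge> 1"
  shows "Ccond n t0 t (Theta n (u, u')) \<longleftrightarrow>
     (t0 \<le> u 1 \<and> (\<forall>i\<in>{1..<n}. u i \<le> u (i+1)) \<and> u n \<le> t) \<and> (\<forall>m\<in>{1..n}. u m \<le> u' m \<and> u' m \<le> t)"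
proof -
  have e0: "Theta n (u, u') 0 = u 1" using Theta_vals(1)[of 1 n "(u,u')"] n by simp
  have ei: "Theta n (u, u') (2*i-2) = u i \<and> Theta n (u, u') (2*i) = u (i+1)" if "i \<in> {1..<n}" for i
    using Theta_vals(1)[of i n "(u,u')"] Theta_vals(1)[of "i+1" n "(u,u')"] that by auto
  have en: "Theta n (u, u') (2*n-2) = u n" using Theta_vals(1)[of n n "(u,u')"] n by simp
  have em: "Theta n (u, u') (2*m-2) = u m \<and> Theta n (u, u') (2*m-1) = u' m" if "m \<in> {1..n}" for m
    using Theta_vals[OF that, of "(u,u')"] by simp
  have c2: "(\<forall>i\<in>{1..<n}. Theta n (u, u') (2*i-2) \<le> Theta n (u, u') (2*i)) \<longleftrightarrow> (\<forall>i\<in>{1..<n}. u i \<le> u (i+1))"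
    using ei by auto
  have c4: "(\<forall>m\<in>{1..n}. Theta n (u, u') (2*m-2) \<le> Theta n (u, u') (2*m-1) \<and> Theta n (u, u') (2*m-1) \<le> t)
      \<longleftrightarrow> (\<forall>m\<in>{1..n}. u m \<le> u' m \<and> u' m \<le> t)"
    using em by auto
  show ?thesis unfolding Ccond_def using e0 en c2 c4 by auto
qed

lemma interleave_Theta: "interleave_arg n u u' = Theta n (u, u')"
  by (rule ext) (simp add: interleave_arg_def Theta_def)

lemma Psi_meas:
  assumes "pairing n P"
  shows "Psi n P \<in> lebR {..<2*n} \<rightarrow>\<^sub>M lebR {1..2*n}"
proof -
  have b: "bij_betw (inv_into {..<2*n} (hP P)) {1..2*n} {..<2*n}" by (rule bij_betw_inv_into[OF hP_bij[OF assms]])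
  show ?thesis unfolding Psi_def
    using b by (intro measurable_restrict measurable_component_singleton) (auto simp: bij_betw_def)
qed

lemma Psi_distr:
  assumes "pairing n P"
  shows "distr (lebR {..<2*n}) (lebR {1..2*n}) (Psi n P) = lebR {1..2*n}"
proof -
  have b: "bij_betw (inv_into {..<2*n} (hP P)) {1..2*n} {..<2*n}" by (rule bij_betw_inv_into[OF hP_bij[OF assms]])
  have e: "Psi n P = (\<lambda>x. \<lambda>j\<in>{1..2*n}. x (inv_into {..<2*n} (hP P) j))" by (rule ext) (simp add: Psi_def)
  show ?thesis unfolding e by (rule reindex_distr[OF _ b]) simp
qed

lemma Aset_sets:
  assumes "n \<ge> 1"
  shows "{tt \<in> space (lebR {1..2*n}). Acond n t0 t tt} \<in> sets (lebR {1..2*n})"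
  unfolding Acond_def using assms
  apply (intro sets.sets_Collect_conj sets.sets_Collect_finite_All)
  apply (auto intro!: borel_measurable_le measurable_component_singleton)
  done

lemma Cset_sets:
  assumes "n \<ge> 1"
  shows "{y \<in> space (lebR {..<2*n}). Ccond n t0 t y} \<in> sets (lebR {..<2*n})"
  unfolding Ccond_def using assms
  apply (intro sets.sets_Collect_conj sets.sets_Collect_finite_All)
  apply (auto intro!: borel_measurable_le measurable_component_singleton)
  done

lemma integrable_region:
  assumes loc: "locally_integrable_2n n g" and B: "B \<in> sets (lebR {..<2*n})"
    and bd: "\<And>y k. y \<in> B \<Longrightarrow> k < 2*n \<Longrightarrow> t0 \<le> y k \<and> y k \<le> t"
  shows "integrable (lebR {..<2*n}) (\<lambda>y. indicator B y * g y)"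
proof -
  define R where "R = \<bar>t0\<bar> + \<bar>t\<bar>"
  have si: "set_integrable (lebR {..<2*n}) {x. \<forall>i<2*n. \<bar>x i\<bar> \<le> R} g"
    using loc by (simp add: locally_integrable_2n_def)
  have sub: "B \<subseteq> {x. \<forall>i<2*n. \<bar>x i\<bar> \<le> R}"
  proof
    fix y assume y: "y \<in> B"
    have "\<bar>y i\<bar> \<le> R" if "i < 2*n" for i using bd[OF y that] unfolding R_def by linarith
    then show "y \<in> {x. \<forall>i<2*n. \<bar>x i\<bar> \<le> R}" by simp
  qed
  have "set_integrable (lebR {..<2*n}) B g" by (rule set_integrable_subset[OF si B sub])
  then show ?thesis by (simp add: set_integrable_def)
qed

lemma LHS_P:
  fixes g :: "(nat \<Rightarrow> real) \<Rightarrow> real"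
  assumes n: "n \<ge> 1" and P: "pairing n P" and gm: "g \<in> borel_measurable (lebR {..<2*n})"
  shows "(LINT tt : {tt. t0 \<le> tt 1 \<and> (\<forall>i\<in>{1..<2*n}. tt i \<le> tt (i+1)) \<and> tt (2*n) \<le> t} | lebR {1..2*n}. g (pairing_arg n P tt))
       = (\<integral>y. indicator {y \<in> space (lebR {..<2*n}). Acond n t0 t (Psi n P y)} y * g y \<partial>lebR {..<2*n})"
proof -
  define As where "As = {tt \<in> space (lebR {1..2*n}). Acond n t0 t tt}"
  define Phi where "Phi tt = (\<lambda>k\<in>{..<2*n}. tt (hP P k))" for tt :: "nat \<Rightarrow> real"
  have Phim: "Phi \<in> lebR {1..2*n} \<rightarrow>\<^sub>M lebR {..<2*n}" unfolding Phi_def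
    using hP_range[OF P] by (intro measurable_restrict measurable_component_singleton) auto
  have Asm: "As \<in> sets (lebR {1..2*n})" unfolding As_def by (rule Aset_sets[OF n])
  define F where "F tt = indicator As tt * g (Phi tt)" for tt
  have Fm: "F \<in> borel_measurable (lebR {1..2*n})" unfolding F_def
    by (rule Borel_Space.borel_measurable_times[OF borel_measurable_indicator[OF Asm]]) (rule measurable_compose[OF Phim gm])
  have "(LINT tt : {tt. t0 \<le> tt 1 \<and> (\<forall>i\<in>{1..<2*n}. tt i \<le> tt (i+1)) \<and> tt (2*n) \<le> t} | lebR {1..2*n}. g (pairing_arg n P tt))
      = (\<integral>tt. F tt \<partial>lebR {1..2*n})"
    unfolding set_lebesgue_integral_def
    by (rule Bochner_Integration.integral_cong[OF refl]) (auto simp: F_def As_def Acond_def pairing_arg_eq Phi_def indicator_def)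
  also have "\<dots> = (\<integral>tt. F tt \<partial>(distr (lebR {..<2*n}) (lebR {1..2*n}) (Psi n P)))" by (simp only: Psi_distr[OF P])
  also have "\<dots> = (\<integral>y. F (Psi n P y) \<partial>lebR {..<2*n})" by (rule integral_distr[OF Psi_meas[OF P] Fm])
  also have "\<dots> = (\<integral>y. indicator {y \<in> space (lebR {..<2*n}). Acond n t0 t (Psi n P y)} y * g y \<partial>lebR {..<2*n})"
  proof (rule Bochner_Integration.integral_cong[OF refl])
    fix y assume y: "y \<in> space (lebR {..<2*n})"
    have ps: "Psi n P y \<in> space (lebR {1..2*n})" by (rule measurable_space[OF Psi_meas[OF P] y])
    have "Phi (Psi n P y) = y"
    proof (rule ext)
      fix k show "Phi (Psi n P y) k = y k"
      proof (cases "k \<in> {..<2*n}")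
        case True then show ?thesis by (simp add: Phi_def Psi_h[OF P True])
      next
        case False
        then have "y k = undefined" using y by (auto simp: space_PiM PiE_def extensional_def)
        then show ?thesis using False by (simp add: Phi_def)
      qed
    qed
    then show "F (Psi n P y) = indicator {y \<in> space (lebR {..<2*n}). Acond n t0 t (Psi n P y)} y * g y"
      using ps y by (simp add: F_def As_def indicator_def)
  qed
  finally show ?thesis .
qed

lemma RHS_eq:
  assumes n: "n \<ge> 1" and loc: "locally_integrable_2n n g"
  shows "(LINT u : {u. t0 \<le> u 1 \<and> (\<forall>i\<in>{1..<n}. u i \<le> u (i+1)) \<and> u n \<le> t} | lebR {1..n}.
            (LINT u' : {u'. \<forall>m\<in>{1..n}. u m \<le> u' m \<and> u' m \<le> t} | lebR {1..n}.
               g (interleave_arg n u u')))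
     = (\<integral>y. indicator {y \<in> space (lebR {..<2*n}). Ccond n t0 t y} y * g y \<partial>lebR {..<2*n})"
proof -
  interpret product_sigma_finite "\<lambda>_::nat. lborel::real measure" by (rule psf)
  interpret I1: finite_product_sigma_finite "\<lambda>_::nat. lborel::real measure" "{1..n}" by standard simp
  interpret PP: pair_sigma_finite "lebR {1..n}" "lebR {1..n}" by standard
  define Cs where "Cs = {y \<in> space (lebR {..<2*n}). Ccond n t0 t y}"
  define G where "G = (\<lambda>y. indicator Cs y * g y)"
  have Csm: "Cs \<in> sets (lebR {..<2*n})" unfolding Cs_def by (rule Cset_sets[OF n])
  have Gi: "integrable (lebR {..<2*n}) G" unfolding G_def
    by (rule integrable_region[OF loc Csm, of t0 t]) (auto simp: Cs_def dest: C_bounds)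
  have Gm: "G \<in> borel_measurable (lebR {..<2*n})" using Gi by (rule borel_measurable_integrable)
  have Gi2: "integrable (lebR {1..n} \<Otimes>\<^sub>M lebR {1..n}) (\<lambda>p. G (Theta n p))"
    using Gi integrable_distr_eq[OF Theta_meas Gm] Theta_distr by simp
  have "(LINT u : {u. t0 \<le> u 1 \<and> (\<forall>i\<in>{1..<n}. u i \<le> u (i+1)) \<and> u n \<le> t} | lebR {1..n}.
            (LINT u' : {u'. \<forall>m\<in>{1..n}. u m \<le> u' m \<and> u' m \<le> t} | lebR {1..n}.
               g (interleave_arg n u u')))
      = (\<integral>u. (\<integral>u'. G (Theta n (u, u')) \<partial>lebR {1..n}) \<partial>lebR {1..n})"
    unfolding set_lebesgue_integral_def
  proof (rule Bochner_Integration.integral_cong[OF refl])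
    fix u assume u: "u \<in> space (lebR {1..n})"
    show "indicator {u. t0 \<le> u 1 \<and> (\<forall>i\<in>{1..<n}. u i \<le> u (i+1)) \<and> u n \<le> t} u *\<^sub>R
            (\<integral>u'. indicator {u'. \<forall>m\<in>{1..n}. u m \<le> u' m \<and> u' m \<le> t} u' *\<^sub>R g (interleave_arg n u u') \<partial>lebR {1..n})
        = (\<integral>u'. G (Theta n (u, u')) \<partial>lebR {1..n})"
      unfolding real_scaleR_def integral_mult_right_zero[symmetric]
    proof (rule Bochner_Integration.integral_cong[OF refl])
      fix u' assume u': "u' \<in> space (lebR {1..n})"
      have "Theta n (u, u') \<in> space (lebR {..<2*n})"
        using measurable_space[OF Theta_meas, of "(u, u')" n] u u' by (simp add: space_pair_measure)
      then show "indicator {u. t0 \<le> u 1 \<and> (\<forall>i\<in>{1..<n}. u i \<le> u (i+1)) \<and> u n \<le> t} u *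
          (indicator {u'. \<forall>m\<in>{1..n}. u m \<le> u' m \<and> u' m \<le> t} u' * g (interleave_arg n u u'))
          = G (Theta n (u, u'))"
        using Theta_Ccond[OF n, of t0 t u u'] by (auto simp: G_def Cs_def interleave_Theta indicator_def)
    qed
  qed
  also have "\<dots> = integral\<^sup>L (lebR {1..n} \<Otimes>\<^sub>M lebR {1..n}) (\<lambda>p. G (Theta n p))"
    by (rule PP.integral_fst'[OF Gi2])
  also have "\<dots> = integral\<^sup>L (distr (lebR {1..n} \<Otimes>\<^sub>M lebR {1..n}) (lebR {..<2*n}) (Theta n)) G"
    by (rule integral_distr[symmetric, OF Theta_meas Gm])
  also have "\<dots> = integral\<^sup>L (lebR {..<2*n}) G" by (simp only: Theta_distr)
  finally show ?thesis by (simp only: G_def Cs_def)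
qed

lemma pointwise_sum:
  assumes n: "n \<ge> 1" and y: "y \<in> space (lebR {..<2*n})" and inj: "inj_on y {..<2*n}"
  shows "(\<Sum>P\<in>{P. pairing n P}. indicator {y \<in> space (lebR {..<2*n}). Acond n t0 t (Psi n P y)} y * g y)
       = indicator {y \<in> space (lebR {..<2*n}). Ccond n t0 t y} y * (g y :: real)"
proof (cases "Ccond n t0 t y")
  case True
  have Q: "Qy n y \<in> {P. pairing n P}" using Qy_pairing(1)[OF inj True] by simp
  have "(\<Sum>P\<in>{P. pairing n P}. indicator {y \<in> space (lebR {..<2*n}). Acond n t0 t (Psi n P y)} y * g y)
      = (\<Sum>P\<in>{P. pairing n P}. if P = Qy n y then g y else 0)"
  proof (rule sum.cong[OF refl])
    fix P assume P: "P \<in> {P. pairing n P}"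
    have "Acond n t0 t (Psi n P y) \<longleftrightarrow> P = Qy n y"
      using A_unique[OF inj _ , of P t0 t] C_to_A[OF inj True n] P by auto
    then show "indicator {y \<in> space (lebR {..<2*n}). Acond n t0 t (Psi n P y)} y * g y = (if P = Qy n y then g y else 0)"
      using y by (simp add: indicator_def)
  qed
  also have "\<dots> = g y" using Q pairings_finite[of n] by (simp add: sum.delta)
  finally show ?thesis using True y by (simp add: indicator_def)
next
  case False
  have z: "indicator {y \<in> space (lebR {..<2*n}). Acond n t0 t (Psi n P y)} y * g y = 0" if "P \<in> {P. pairing n P}" for P
    using A_to_C[of n P t0 t y] that n False by (auto simp: indicator_def)
  have "(\<Sum>P\<in>{P. pairing n P}. indicator {y \<in> space (lebR {..<2*n}). Acond n t0 t (Psi n P y)} y * g y) = 0"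
    by (intro sum.neutral ballI z)
  then show ?thesis using False by (simp add: indicator_def)
qed

theorem lemma4p3:
  fixes n :: nat and t0 t :: real and g :: "(nat \<Rightarrow> real) \<Rightarrow> real"
  assumes "n \<ge> 1" and "0 \<le> t0" and "t0 < t"
    and "locally_integrable_2n n g"
  shows "(\<Sum>P\<in>{P. pairing n P}.
            LINT tt : {tt. t0 \<le> tt 1 \<and> (\<forall>i\<in>{1..<2*n}. tt i \<le> tt (i+1)) \<and> tt (2*n) \<le> t}
              | lebR {1..2*n}. g (pairing_arg n P tt))
       = (LINT u : {u. t0 \<le> u 1 \<and> (\<forall>i\<in>{1..<n}. u i \<le> u (i+1)) \<and> u n \<le> t} | lebR {1..n}.
            (LINT u' : {u'. \<forall>m\<in>{1..n}. u m \<le> u' m \<and> u' m \<le> t} | lebR {1..n}.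
               g (interleave_arg n u u')))"
proof -
  note n = assms(1) and loc = assms(4)
  have gm: "g \<in> borel_measurable (lebR {..<2*n})" by (rule g_meas[OF loc])
  define B where "B P = {y \<in> space (lebR {..<2*n}). Acond n t0 t (Psi n P y)}" for P
  have Bm: "B P \<in> sets (lebR {..<2*n})" if P: "pairing n P" for P
  proof -
    have "B P = Psi n P -` {tt \<in> space (lebR {1..2*n}). Acond n t0 t tt} \<inter> space (lebR {..<2*n})"
      using measurable_space[OF Psi_meas[OF P]] by (auto simp: B_def)
    also have "\<dots> \<in> sets (lebR {..<2*n})" by (rule measurable_sets[OF Psi_meas[OF P] Aset_sets[OF n]])
    finally show ?thesis .
  qed
  have Bi: "integrable (lebR {..<2*n}) (\<lambda>y. indicator (B P) y * g y)" if P: "pairing n P" for P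
  proof (rule integrable_region[OF loc Bm[OF P], of t0 t])
    fix y k assume "y \<in> B P" "k < 2*n"
    then show "t0 \<le> y k \<and> y k \<le> t" using A_to_C[OF P n, of t0 t y] C_bounds[of n t0 t y k] by (auto simp: B_def)
  qed
  have "(\<Sum>P\<in>{P. pairing n P}.
            LINT tt : {tt. t0 \<le> tt 1 \<and> (\<forall>i\<in>{1..<2*n}. tt i \<le> tt (i+1)) \<and> tt (2*n) \<le> t}
              | lebR {1..2*n}. g (pairing_arg n P tt))
      = (\<Sum>P\<in>{P. pairing n P}. \<integral>y. indicator (B P) y * g y \<partial>lebR {..<2*n})"
    unfolding B_def by (rule sum.cong[OF refl]) (rule LHS_P[OF n _ gm], simp)
  also have "\<dots> = (\<integral>y. (\<Sum>P\<in>{P. pairing n P}. indicator (B P) y * g y) \<partial>lebR {..<2*n})"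
    by (rule Bochner_Integration.integral_sum[symmetric]) (rule Bi, simp)
  also have "\<dots> = (\<integral>y. indicator {y \<in> space (lebR {..<2*n}). Ccond n t0 t y} y * g y \<partial>lebR {..<2*n})"
  proof (rule integral_cong_AE)
    show "(\<lambda>y. \<Sum>P\<in>{P. pairing n P}. indicator (B P) y * g y) \<in> borel_measurable (lebR {..<2*n})"
      by (rule borel_measurable_sum) (rule borel_measurable_integrable[OF Bi], simp)
    show "(\<lambda>y. indicator {y \<in> space (lebR {..<2*n}). Ccond n t0 t y} y * g y) \<in> borel_measurable (lebR {..<2*n})"
      by (rule borel_measurable_integrable[OF integrable_region[OF loc Cset_sets[OF n], of t0 t]])
         (auto dest: C_bounds)
    show "AE y in lebR {..<2*n}. (\<Sum>P\<in>{P. pairing n P}. indicator (B P) y * g y) =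
             indicator {y \<in> space (lebR {..<2*n}). Ccond n t0 t y} y * g y"
      using AE_space inj_AE[OF finite_lessThan[of "2*n"]]
    proof eventually_elim
      case (elim y)
      then show ?case using pointwise_sum[OF n, of y t0 t g] by (simp add: B_def)
    qed
  qed
  also have "\<dots> = (LINT u : {u. t0 \<le> u 1 \<and> (\<forall>i\<in>{1..<n}. u i \<le> u (i+1)) \<and> u n \<le> t} | lebR {1..n}.
            (LINT u' : {u'. \<forall>m\<in>{1..n}. u m \<le> u' m \<and> u' m \<le> t} | lebR {1..n}.
               g (interleave_arg n u u')))"
    by (rule RHS_eq[OF n loc, symmetric])
  finally show ?thesis .
qed

end
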